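(* Let $L\in(0,\infty]$ and let $\gamma\in C^\infty([0,L),\mathbb{R}^2)$ be an arclength-parameterized plane curve with $\gamma(s)\neq0$ for all $s\in(0,L)$, with unit tangent $T=\gamma_s$, unit normal $N=R_{\pi/2}T$, signed curvature $\kappa$ ($\gamma_{ss}=\kappa N$) and polar tangential angle function $\omega:(0,L)\to\mathbb{R}$. Let $s\in(0,L)$ with $\kappa(s)\neq0$, and let $e(s):=\gamma(s)+\kappa(s)^{-1}N(s)$ (the center of the osculating circle). Then: (i) $\kappa(s)\omega_s(s)$ and $\gamma(s)\cdot e(s)$ have the same sign; (ii) equivalently, letting $\hat c(s)$ be the circle having the segment from $\gamma(s)$ to $e(s)$ as a diameter, $\kappa(s)\omega_s(s)>0$ iff the origin lies outside $\hat c(s)$, $\kappa(s)\omega_s(s)<0$ iff the origin lies inside $\hat c(s)$, and $\kappa(s)\omega_s(s)=0$ iff the origin lies on $\hat c(s)$; (iii) in particular, if the origin does not belong to the open disk $D(s)$ of radius $1/|\kappa(s)|$ centered at $e(s)$ (the disk enclosed by the osculating circle), then $\kappa(s)\omega_s(s)>0$.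
   Context: $R_\theta$ denotes counterclockwise rotation by angle $\theta$. With $X:=\gamma/|\gamma|$ on $(0,L)$, a polar tangential angle function is a smooth $\omega:(0,L)\to\mathbb{R}$ with $R_{\omega(s)}X(s)=T(s)$ for all $s\in(0,L)$. *)

theory Defs
  imports "HOL-Analysis.Analysis"
begin

definition smooth_on :: "real set \<Rightarrow> (real \<Rightarrow> 'a::real_normed_vector) \<Rightarrow> bool" where
  "smooth_on S f \<longleftrightarrow> (\<exists>D :: nat \<Rightarrow> real \<Rightarrow> 'a.
      (\<forall>x\<in>S. D 0 x = f x) \<and>
      (\<forall>k. \<forall>x\<in>S. (D k has_vector_derivative D (Suc k) x) (at x within S)))"

definition rot :: "real \<Rightarrow> real^2 \<Rightarrow> real^2" where
  "rot \<theta> v = vector [cos \<theta> * v$1 - sin \<theta> * v$2, sin \<theta> * v$1 + cos \<theta> * v$2]"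

end

theory Submission
  imports Defs
begin

lemma comp_deriv:
  assumes "(f has_vector_derivative v) (at x)"
  shows "((\<lambda>t. f t $ i) has_real_derivative v $ i) (at x)"
  using bounded_linear.has_vector_derivative[OF bounded_linear_vec_nth assms, of i]
  by (simp add: has_real_derivative_iff_has_vector_derivative)

lemma norm2_sq: "(norm (x::real^2))^2 = x$1 * x$1 + x$2 * x$2"
  by (simp add: power2_norm_eq_inner inner_vec_def sum_2)

lemma inner2: "(x::real^2) \<bullet> y = x$1 * y$1 + x$2 * y$2"
  by (simp add: inner_vec_def sum_2)

lemma rot_nth: "rot a v $ 1 = cos a * v$1 - sin a * v$2" "rot a v $ 2 = sin a * v$1 + cos a * v$2"
  by (simp_all add: rot_def)

lemma geom:
  fixes g e :: "real^2"
  shows "(dist 0 ((1/2) *\<^sub>R (g + e)))^2 - (dist g e / 2)^2 = g \<bullet> e"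
  by (simp add: dist_norm power2_norm_eq_inner inner_add_left inner_add_right
      inner_diff_left inner_diff_right inner_commute power_divide field_simps)

theorem corollary2p5:
  fixes L :: ereal and \<gamma> T N :: "real \<Rightarrow> real^2" and \<kappa> \<omega> :: "real \<Rightarrow> real" and s :: real
  assumes L_pos: "0 < L"
    and smooth: "smooth_on {t. 0 \<le> t \<and> ereal t < L} \<gamma>"
    and T_def: "\<forall>t. 0 \<le> t \<and> ereal t < L \<longrightarrow>
                 (\<gamma> has_vector_derivative T t) (at t within {t. 0 \<le> t \<and> ereal t < L})"
    and arclength: "\<forall>t. 0 \<le> t \<and> ereal t < L \<longrightarrow> norm (T t) = 1"
    and N_def: "\<forall>t. N t = rot (pi/2) (T t)"
    and curvature: "\<forall>t. 0 \<le> t \<and> ereal t < L \<longrightarrow>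
                 (T has_vector_derivative \<kappa> t *\<^sub>R N t) (at t within {t. 0 \<le> t \<and> ereal t < L})"
    and nonzero: "\<forall>t. 0 < t \<and> ereal t < L \<longrightarrow> \<gamma> t \<noteq> 0"
    and \<omega>_smooth: "smooth_on {t. 0 < t \<and> ereal t < L} \<omega>"
    and \<omega>_polar: "\<forall>t. 0 < t \<and> ereal t < L \<longrightarrow> rot (\<omega> t) (\<gamma> t /\<^sub>R norm (\<gamma> t)) = T t"
    and s_in: "0 < s" "ereal s < L"
    and \<kappa>_nz: "\<kappa> s \<noteq> 0"
  shows "(let e = \<gamma> s + (1 / \<kappa> s) *\<^sub>R N s;
              m = (1/2) *\<^sub>R (\<gamma> s + e);
              r = dist (\<gamma> s) e / 2;
              k\<omega> = \<kappa> s * deriv \<omega> s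
          in sgn k\<omega> = sgn (\<gamma> s \<bullet> e)
           \<and> (k\<omega> > 0 \<longleftrightarrow> dist 0 m > r)
           \<and> (k\<omega> < 0 \<longleftrightarrow> dist 0 m < r)
           \<and> (k\<omega> = 0 \<longleftrightarrow> dist 0 m = r)
           \<and> (0 \<notin> ball e (1 / \<bar>\<kappa> s\<bar>) \<longrightarrow> k\<omega> > 0))"
proof -
  define S where "S = {t. 0 \<le> t \<and> ereal t < L}"
  define U where "U = {t. 0 < t \<and> ereal t < L}"
  have U_eq: "U = {0<..} \<inter> ereal -` {..<L}" unfolding U_def by auto
  have openU: "open U" unfolding U_eq
    by (intro open_Int open_greaterThan open_ereal_vimage open_lessThan)
  have sU: "s \<in> U" using s_in unfolding U_def by auto
  have US: "U \<subseteq> S" unfolding U_def S_def by auto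
  have sint: "s \<in> interior S" using interior_maximal[OF US openU] sU by auto
  have atS: "at s within S = at s" using at_within_interior[OF sint] .
  have s0: "0 \<le> s" using s_in by simp
  have dg: "(\<gamma> has_vector_derivative T s) (at s)"
    using T_def s0 s_in(2) atS unfolding S_def by metis
  have dT: "(T has_vector_derivative \<kappa> s *\<^sub>R N s) (at s)"
    using curvature s0 s_in(2) atS unfolding S_def by metis
  obtain D :: "nat \<Rightarrow> real \<Rightarrow> real" where D0: "\<forall>x\<in>U. D 0 x = \<omega> x"
    and DS: "\<forall>k. \<forall>x\<in>U. (D k has_vector_derivative D (Suc k) x) (at x within U)"
    using \<omega>_smooth unfolding smooth_on_def U_def by blast
  have "(D 0 has_real_derivative D 1 s) (at s)"
    using DS sU at_within_open[OF sU openU]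
    by (metis One_nat_def has_real_derivative_iff_has_vector_derivative)
  then have d\<omega>: "(\<omega> has_real_derivative D 1 s) (at s)"
    by (rule has_field_derivative_transform_within_open[OF _ openU sU]) (use D0 in auto)
  define w' where "w' = D 1 s"
  have dw: "deriv \<omega> s = w'" using DERIV_imp_deriv[OF d\<omega>] w'_def by simp
  define F where "F t = \<gamma> t $ 1 * T t $ 2 - \<gamma> t $ 2 * T t $ 1" for t
  define G where "G t = \<gamma> t $ 1 * T t $ 1 + \<gamma> t $ 2 * T t $ 2" for t
  define P where "P t = cos (\<omega> t) * F t - sin (\<omega> t) * G t" for t
  define g1 where "g1 = \<gamma> s $ 1"
  define g2 where "g2 = \<gamma> s $ 2"
  define t1 where "t1 = T s $ 1"
  define t2 where "t2 = T s $ 2"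
  define k where "k = \<kappa> s"
  have Nn: "N t $ 1 = - T t $ 2" "N t $ 2 = T t $ 1" for t
    using N_def by (simp_all add: rot_nth)
  have dg1: "((\<lambda>t. \<gamma> t $ 1) has_real_derivative t1) (at s)"
    using comp_deriv[OF dg] g1_def t1_def by simp
  have dg2: "((\<lambda>t. \<gamma> t $ 2) has_real_derivative t2) (at s)"
    using comp_deriv[OF dg] t2_def by simp
  have dT1: "((\<lambda>t. T t $ 1) has_real_derivative - k * t2) (at s)"
    using comp_deriv[OF dT, of 1] Nn k_def t2_def by simp
  have dT2: "((\<lambda>t. T t $ 2) has_real_derivative k * t1) (at s)"
    using comp_deriv[OF dT, of 2] Nn k_def t1_def by simp
  have Fs: "F s = g1 * t2 - g2 * t1" "G s = g1 * t1 + g2 * t2"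
    unfolding F_def G_def g1_def g2_def t1_def t2_def by auto
  have dF: "(F has_real_derivative k * G s) (at s)"
  proof -
    have "(F has_real_derivative (t1 * T s $ 2 + k * t1 * \<gamma> s $ 1) - (t2 * T s $ 1 + (- k * t2) * \<gamma> s $ 2)) (at s)"
      unfolding F_def by (intro DERIV_diff DERIV_mult dg1 dg2 dT1 dT2)
    then show ?thesis by (simp add: Fs g1_def g2_def t1_def t2_def algebra_simps)
  qed
  have tn: "t1 * t1 + t2 * t2 = 1"
    using arclength s0 s_in(2) norm2_sq[of "T s"] t1_def t2_def by auto
  have dG: "(G has_real_derivative 1 - k * F s) (at s)"
  proof -
    have "(G has_real_derivative (t1 * T s $ 1 + (- k * t2) * \<gamma> s $ 1) + (t2 * T s $ 2 + k * t1 * \<gamma> s $ 2)) (at s)"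
      unfolding G_def by (intro DERIV_add DERIV_mult dg1 dg2 dT1 dT2)
    then show ?thesis by (rule DERIV_cong) (use tn in \<open>simp add: Fs g1_def g2_def t1_def t2_def algebra_simps\<close>)
  qed
  define c where "c = cos (\<omega> s)"
  define sn where "sn = sin (\<omega> s)"
  have dcos: "((\<lambda>t. cos (\<omega> t)) has_real_derivative - sn * w') (at s)"
    unfolding sn_def w'_def by (rule derivative_eq_intros d\<omega> refl | simp)+
  have dsin: "((\<lambda>t. sin (\<omega> t)) has_real_derivative c * w') (at s)"
    unfolding c_def w'_def by (rule derivative_eq_intros d\<omega> refl | simp)+
  have dP: "(P has_real_derivative (- sn * w' * F s + c * (k * G s)) - (c * w' * G s + sn * (1 - k * F s))) (at s)"
  proof -
    have "(P has_real_derivative (- sn * w' * F s + k * G s * cos (\<omega> s)) - (c * w' * G s + (1 - k * F s) * sin (\<omega> s))) (at s)"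
      unfolding P_def by (intro DERIV_diff DERIV_mult dcos dsin dF dG)
    then show ?thesis by (simp add: c_def sn_def algebra_simps)
  qed
  define \<rho> where "\<rho> = norm (\<gamma> s)"
  have \<rho>pos: "\<rho> > 0" using nonzero s_in unfolding \<rho>_def by auto
  have \<rho>sq: "\<rho>^2 = g1 * g1 + g2 * g2" unfolding \<rho>_def g1_def g2_def by (rule norm2_sq)
  have pol: "F t = norm (\<gamma> t) * sin (\<omega> t) \<and> G t = norm (\<gamma> t) * cos (\<omega> t)" if "t \<in> U" for t
  proof -
    have tt: "0 < t" "ereal t < L" using that unfolding U_def by auto
    let ?r = "norm (\<gamma> t)"
    have rp: "?r > 0" using nonzero tt by auto
    have rs: "?r * ?r = \<gamma> t $ 1 * \<gamma> t $ 1 + \<gamma> t $ 2 * \<gamma> t $ 2"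
      using norm2_sq[of "\<gamma> t"] by (simp add: power2_eq_square)
    have e: "T t = rot (\<omega> t) (\<gamma> t /\<^sub>R ?r)" using \<omega>_polar tt by auto
    have T1: "T t $ 1 = (cos (\<omega> t) * \<gamma> t $ 1 - sin (\<omega> t) * \<gamma> t $ 2) / ?r"
      unfolding e rot_nth by (simp add: divide_inverse algebra_simps)
    have T2: "T t $ 2 = (sin (\<omega> t) * \<gamma> t $ 1 + cos (\<omega> t) * \<gamma> t $ 2) / ?r"
      unfolding e rot_nth by (simp add: divide_inverse algebra_simps)
    have "F t = sin (\<omega> t) * (?r * ?r) / ?r"
      unfolding F_def T1 T2 rs using rp by (simp add: field_simps)
    moreover have "G t = cos (\<omega> t) * (?r * ?r) / ?r"
      unfolding G_def T1 T2 rs using rp by (simp add: field_simps)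
    ultimately show ?thesis using rp by simp
  qed
  have P0: "P t = 0" if "t \<in> U" for t
    using pol[OF that] unfolding P_def by (simp add: algebra_simps)
  have "((\<lambda>_. 0::real) has_real_derivative 0) (at s)" by simp
  then have "(P has_real_derivative 0) (at s)"
    by (rule has_field_derivative_transform_within_open[OF _ openU sU]) (use P0 in auto)
  then have dP0: "(- sn * w' * F s + c * (k * G s)) - (c * w' * G s + sn * (1 - k * F s)) = 0"
    using DERIV_unique[OF dP] by simp
  have FsG: "F s = \<rho> * sn" "G s = \<rho> * c" using pol[OF sU] unfolding \<rho>_def sn_def c_def by auto
  have sc: "sn * sn + c * c = 1" unfolding sn_def c_def using sin_cos_squared_add[of "\<omega> s"] by (simp add: power2_eq_square)
  have key: "w' * \<rho> = k * \<rho> - sn"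
  proof -
    have "w' * \<rho> * (sn * sn + c * c) = k * \<rho> * (sn * sn + c * c) - sn"
      using dP0 unfolding FsG by (simp add: algebra_simps)
    then show ?thesis using sc by simp
  qed
  define e where "e = \<gamma> s + (1 / \<kappa> s) *\<^sub>R N s"
  have ge: "\<gamma> s \<bullet> e = \<rho>^2 - F s / k"
    unfolding e_def inner_add_right inner_scaleR_right inner2 Nn \<rho>sq Fs k_def g1_def g2_def t1_def t2_def
    using \<kappa>_nz by (simp add: Nn field_simps)
  have kw: "k * w' * \<rho>^2 = k^2 * (\<gamma> s \<bullet> e)"
  proof -
    have kz: "k \<noteq> 0" using \<kappa>_nz k_def by simp
    have "k * w' * \<rho>^2 = k * \<rho> * (w' * \<rho>)" by (simp add: power2_eq_square)
    also have "\<dots> = k * \<rho> * (k * \<rho> - sn)" using key by simp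
    also have "\<dots> = k^2 * (\<rho>^2 - \<rho> * sn / k)" using kz by (simp add: field_simps power2_eq_square)
    finally show ?thesis unfolding ge FsG .
  qed
  have k2: "k^2 > 0" using \<kappa>_nz k_def by simp
  have r2: "\<rho>^2 > 0" using \<rho>pos by simp
  have sgneq: "sgn (k * w') = sgn (\<gamma> s \<bullet> e)"
  proof -
    have "sgn (k * w' * \<rho>^2) = sgn (k * w')" by (metis sgn_mult sgn_pos mult.right_neutral r2)
    moreover have "sgn (k^2 * (\<gamma> s \<bullet> e)) = sgn (\<gamma> s \<bullet> e)" by (metis sgn_mult sgn_pos mult_1 k2)
    ultimately show ?thesis using kw by simp
  qed
  define m where "m = (1/2) *\<^sub>R (\<gamma> s + e)"
  define r where "r = dist (\<gamma> s) e / 2"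
  have gm: "(dist 0 m)^2 - r^2 = \<gamma> s \<bullet> e" unfolding m_def r_def by (rule geom)
  have rnn: "r \<ge> 0" unfolding r_def by simp
  have dnn: "dist 0 m \<ge> 0" by simp
  have c1: "dist 0 m > r \<longleftrightarrow> \<gamma> s \<bullet> e > 0"
    using gm rnn dnn by (smt (verit) power_mono power_strict_mono zero_less_numeral)
  have c2: "dist 0 m < r \<longleftrightarrow> \<gamma> s \<bullet> e < 0"
    using gm rnn dnn by (smt (verit) power_mono power_strict_mono zero_less_numeral)
  have c3: "dist 0 m = r \<longleftrightarrow> \<gamma> s \<bullet> e = 0"
    using c1 c2 by linarith
  have pos_iff: "k * w' > 0 \<longleftrightarrow> \<gamma> s \<bullet> e > 0" using sgneq by (metis sgn_greater)
  have neg_iff: "k * w' < 0 \<longleftrightarrow> \<gamma> s \<bullet> e < 0" using sgneq by (metis sgn_less)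
  have zero_iff: "k * w' = 0 \<longleftrightarrow> \<gamma> s \<bullet> e = 0" using sgneq by (metis sgn_0_0)
  have part3: "k * w' > 0" if "0 \<notin> ball e (1 / \<bar>\<kappa> s\<bar>)"
  proof -
    have h1: "norm e \<ge> 1 / \<bar>k\<bar>" using that k_def by (simp add: dist_norm)
    have nN2: "(norm (N s))^2 = 1"
      using norm2_sq[of "N s"] Nn tn t1_def t2_def by (simp add: algebra_simps)
    have nN: "norm (N s) = 1"
      using nN2 norm_ge_zero[of "N s"] by (metis abs_of_nonneg power2_eq_1_iff abs_neg_one abs_one)
    have h2: "norm (e - \<gamma> s) = 1 / \<bar>k\<bar>" unfolding e_def k_def using nN by simp
    have "(norm e)^2 \<ge> (norm (e - \<gamma> s))^2" using h1 h2 by (simp add: power_mono)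
    then have "\<gamma> s \<bullet> \<gamma> s \<le> 2 * (\<gamma> s \<bullet> e)"
      by (simp add: power2_norm_eq_inner inner_diff_left inner_diff_right inner_commute)
    moreover have "\<gamma> s \<bullet> \<gamma> s > 0" using nonzero s_in by auto
    ultimately show ?thesis using pos_iff by linarith
  qed
  have goal: "sgn (k * w') = sgn (\<gamma> s \<bullet> e)
           \<and> (k * w' > 0 \<longleftrightarrow> dist 0 m > r)
           \<and> (k * w' < 0 \<longleftrightarrow> dist 0 m < r)
           \<and> (k * w' = 0 \<longleftrightarrow> dist 0 m = r)
           \<and> (0 \<notin> ball e (1 / \<bar>\<kappa> s\<bar>) \<longrightarrow> k * w' > 0)"
    using sgneq c1 c2 c3 pos_iff neg_iff zero_iff part3 by blast
  show ?thesis unfolding Let_def dw using goal[unfolded m_def r_def e_def k_def] .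
qed

end
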